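(* MUDAN (for any admissible priority rule) is incentive compatible: for every true profile $\theta$, every buyer $i$, every global profile $\theta'$ and every report $\theta''_i=(v''_i,r''_i)$ with $r''_i\subseteq r_i$, we have $u_i(\theta_i,\theta'_{-i})\ge u_i(\theta''_i,\theta''_{-i})$, where $\theta''_{-i}$ is obtained from $\theta'_{-i}$ by replacing by the silent report $(0,\varnothing)$ the report of every buyer that is not reachable from $s$ in the profile graph when $i$ reports $\theta''_i$.
   Context: Single-demand model. A seller $s$ has $m\ge 1$ identical items. Buyers $B=\{1,\dots,n\}$; each buyer $i$ wants at most one item and has a private true profile $\theta_i=(v_i,r_i)$, where $v_i\in\mathbb{R}_{\ge 0}$ is its valuation and $r_i\subseteq B$ its set of out-neighbours. The seller has a fixed, publicly known neighbour set $r_s\subseteq B$, and every buyer is reachable from $s$ in the directed graph with edges $(x,y)$ for $y\in r_x$. A buyer reports $\theta'_i=(v'_i,r'_i)$ with $v'_i\in\mathbb{R}_{\ge0}$ and $r'_i\subseteq r_i$. A global profile $\theta'=(\theta'_1,\dots,\theta'_n)$ determines the profile graph $G_{\theta'}$ on $\{s\}\cup B$ with an edge $(x,y)$ iff $y\in r'_x$ (for $x=s$ use $r_s$). Only buyers reachable from $s$ in $G_{\theta'}$ take part; an unreachable buyer is treated as having the silent report $(0,\varnothing)$ and gets no item and zero payment. A mechanism maps each global profile $\theta'$ to an allocation $\pi(\theta')\in\{0,1\}^n$ and payments $p(\theta')\in\mathbb{R}^n$. Utility: $u_i(\theta')=v_i\pi_i(\theta')-p_i(\theta')$ (true valuation).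 Priority rule: each buyer $i$ is given a priority $\sigma_i$ that is a function of its reported neighbour set $r'_i$ only (e.g. $\sigma_i=|r'_i|$), independent of all reported valuations and non-decreasing with respect to inclusion of $r'_i$; ties are broken by a fixed total order on buyers. MUDAN, run on a reported profile $\theta'$. It maintains an explored set $A\subseteq B$, a winner set $W\subseteq A$, remaining supply $m'=m-|W|$, and tentative payments. For current $A,W$ the potential-winner set $P(A,W)$ is: $P=A$ if $|A\setminus W|\le m'$; otherwise $P=W\cup\{$the $m'$ buyers of $A\setminus W$ with highest reported valuations$\}$ (ties broken by a fixed total order). Buyers in $A\setminus P$ are called exhausted. Initialise $A=r_s$, $W=\varnothing$, and repeat: (1) Closure: while some buyer $x\in W\cup(A\setminus P(A,W))$ (with $P$ recomputed from the current $A,W$) has $r'_x\not\subseteq A$, set $A\leftarrow A\cup r'_x$. (2) Let $P=P(A,W)$; if $P\setminus W=\varnothing$, stop. (3) Let $w$ be the buyer of $P\setminus W$ with highest priority; set its tentative payment $\hat p_w$ to the $(m'+1)$-th highest reported valuation in $A\setminus W$ (current $m'$, before adding $w$), or $0$ if $|A\setminus W|\le m'$; add $w$ to $W$. Output: every $w\in W$ gets $\pi_w=1$, $p_w=\hat p_w$; every other buyer gets $\pi_i=0$, $p_i=0$. *)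

theory Defs
  imports Complex_Main "HOL-Library.While_Combinator"
begin

(* Buyers are the elements of a finite linearly ordered type 'b; the linear order
   of the type is the fixed total order used for all tie-breaking
   (smaller buyer wins ties). *)
type_synonym 'b profile = "'b \<Rightarrow> real \<times> 'b set"

(* Buyers reachable from the seller s in the profile graph G_theta;
   rs is the seller's (public) neighbour set. *)
inductive_set reach :: "'b set \<Rightarrow> 'b profile \<Rightarrow> 'b set" for rs \<theta> where
  seller: "x \<in> rs \<Longrightarrow> x \<in> reach rs \<theta>"
| step: "x \<in> reach rs \<theta> \<Longrightarrow> y \<in> snd (\<theta> x) \<Longrightarrow> y \<in> reach rs \<theta>"

definition silence :: "'b set \<Rightarrow> 'b profile \<Rightarrow> 'b profile" where
  "silence rs \<theta> = (\<lambda>j. if j \<in> reach rs \<theta> then \<theta> j else (0, {}))"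

definition val_beats :: "('b::linorder \<Rightarrow> real) \<Rightarrow> 'b \<Rightarrow> 'b \<Rightarrow> bool" where
  "val_beats v x y \<longleftrightarrow> v x > v y \<or> (v x = v y \<and> x < y)"

definition top_k :: "('b::linorder \<Rightarrow> real) \<Rightarrow> 'b set \<Rightarrow> nat \<Rightarrow> 'b set" where
  "top_k v S k = {x \<in> S. card {y \<in> S. val_beats v y x} < k}"

definition potential :: "nat \<Rightarrow> ('b::linorder \<Rightarrow> real) \<Rightarrow> 'b set \<Rightarrow> 'b set \<Rightarrow> 'b set" where
  "potential m v A W =
     (let m' = m - card W in
      if card (A - W) \<le> m' then A else W \<union> top_k v (A - W) m')"

definition clos_cond :: "nat \<Rightarrow> ('b::linorder \<Rightarrow> real) \<Rightarrow> ('b \<Rightarrow> 'b set) \<Rightarrow> 'b set \<Rightarrow> 'b set \<Rightarrow> bool" where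
  "clos_cond m v r W A \<longleftrightarrow> (\<exists>x \<in> W \<union> (A - potential m v A W). \<not> r x \<subseteq> A)"

definition clos_step :: "nat \<Rightarrow> ('b::linorder \<Rightarrow> real) \<Rightarrow> ('b \<Rightarrow> 'b set) \<Rightarrow> 'b set \<Rightarrow> 'b set \<Rightarrow> 'b set" where
  "clos_step m v r W A = A \<union> r (Min {x \<in> W \<union> (A - potential m v A W). \<not> r x \<subseteq> A})"

definition closure :: "nat \<Rightarrow> ('b::linorder \<Rightarrow> real) \<Rightarrow> ('b \<Rightarrow> 'b set) \<Rightarrow> 'b set \<Rightarrow> 'b set \<Rightarrow> 'b set" where
  "closure m v r A W = while (clos_cond m v r W) (clos_step m v r W) A"

(* tentative payment: (m'+1)-th highest reported valuation in A - W, or 0 if |A - W| \<le> m' *)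
definition price :: "nat \<Rightarrow> ('b::linorder \<Rightarrow> real) \<Rightarrow> 'b set \<Rightarrow> 'b set \<Rightarrow> real" where
  "price m v A W =
     (let m' = m - card W in
      if card (A - W) \<le> m' then 0
      else rev (sort (map v (sorted_list_of_set (A - W)))) ! m')"

definition prio_beats :: "('b set \<Rightarrow> 'p::linorder) \<Rightarrow> ('b::linorder \<Rightarrow> 'b set) \<Rightarrow> 'b \<Rightarrow> 'b \<Rightarrow> bool" where
  "prio_beats \<sigma> r x y \<longleftrightarrow> \<sigma> (r x) > \<sigma> (r y) \<or> (\<sigma> (r x) = \<sigma> (r y) \<and> x < y)"

definition pick :: "('b set \<Rightarrow> 'p::linorder) \<Rightarrow> ('b::linorder \<Rightarrow> 'b set) \<Rightarrow> 'b set \<Rightarrow> 'b" where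
  "pick \<sigma> r S = (THE w. w \<in> S \<and> (\<forall>y \<in> S. y \<noteq> w \<longrightarrow> prio_beats \<sigma> r w y))"

(* main loop; state = (A, W, tentative payments) *)
definition mudan_cond :: "nat \<Rightarrow> ('b::linorder \<Rightarrow> real) \<Rightarrow> ('b \<Rightarrow> 'b set)
    \<Rightarrow> 'b set \<times> 'b set \<times> ('b \<Rightarrow> real) \<Rightarrow> bool" where
  "mudan_cond m v r st =
     (case st of (A, W, p) \<Rightarrow> potential m v (closure m v r A W) W - W \<noteq> {})"

definition mudan_step :: "nat \<Rightarrow> ('b set \<Rightarrow> 'p::linorder) \<Rightarrow> ('b::linorder \<Rightarrow> real) \<Rightarrow> ('b \<Rightarrow> 'b set)
    \<Rightarrow> 'b set \<times> 'b set \<times> ('b \<Rightarrow> real) \<Rightarrow> 'b set \<times> 'b set \<times> ('b \<Rightarrow> real)" where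
  "mudan_step m \<sigma> v r st =
     (case st of (A, W, p) \<Rightarrow>
        let A' = closure m v r A W;
            w = pick \<sigma> r (potential m v A' W - W)
        in (A', insert w W, p(w := price m v A' W)))"

definition mudan_run :: "nat \<Rightarrow> ('b set \<Rightarrow> 'p::linorder) \<Rightarrow> 'b set \<Rightarrow> 'b::linorder profile
    \<Rightarrow> 'b set \<times> 'b set \<times> ('b \<Rightarrow> real)" where
  "mudan_run m \<sigma> rs \<theta>' =
     while (mudan_cond m (\<lambda>j. fst (\<theta>' j)) (\<lambda>j. snd (\<theta>' j)))
           (mudan_step m \<sigma> (\<lambda>j. fst (\<theta>' j)) (\<lambda>j. snd (\<theta>' j)))
           (rs, {}, \<lambda>_. 0)"

definition alloc :: "nat \<Rightarrow> ('b set \<Rightarrow> 'p::linorder) \<Rightarrow> 'b set \<Rightarrow> 'b::linorder profile \<Rightarrow> 'b \<Rightarrow> bool" where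
  "alloc m \<sigma> rs \<theta>' i \<longleftrightarrow> i \<in> fst (snd (mudan_run m \<sigma> rs (silence rs \<theta>')))"

definition payment :: "nat \<Rightarrow> ('b set \<Rightarrow> 'p::linorder) \<Rightarrow> 'b set \<Rightarrow> 'b::linorder profile \<Rightarrow> 'b \<Rightarrow> real" where
  "payment m \<sigma> rs \<theta>' i =
     (if alloc m \<sigma> rs \<theta>' i then snd (snd (mudan_run m \<sigma> rs (silence rs \<theta>'))) i else 0)"

definition utility :: "nat \<Rightarrow> ('b set \<Rightarrow> 'p::linorder) \<Rightarrow> 'b set \<Rightarrow> 'b::linorder profile
    \<Rightarrow> 'b \<Rightarrow> 'b profile \<Rightarrow> real" where
  "utility m \<sigma> rs \<theta> i \<theta>' =
     fst (\<theta> i) * (if alloc m \<sigma> rs \<theta>' i then 1 else 0) - payment m \<sigma> rs \<theta>' i"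

end

theory Submission
  imports Defs
begin
lemma vb_irrefl[simp]: "\<not> val_beats v x x" by (simp add: val_beats_def)
lemma vb_trans: "val_beats v x y \<Longrightarrow> val_beats v y z \<Longrightarrow> val_beats v x z"
  by (auto simp: val_beats_def)
lemma vb_total: "x \<noteq> y \<Longrightarrow> val_beats v x y \<or> val_beats v y x"
  by (auto simp: val_beats_def neq_iff)
lemma vb_asym: "val_beats v x y \<Longrightarrow> \<not> val_beats v y x"
  by (auto simp: val_beats_def)

definition rk :: "('b::linorder \<Rightarrow> real) \<Rightarrow> 'b set \<Rightarrow> 'b \<Rightarrow> nat" where
  "rk v S x = card {y \<in> S. val_beats v y x}"

lemma rk_less:
  fixes S :: "'b::{finite,linorder} set"
  assumes "x \<in> S" "val_beats v x y" shows "rk v S x < rk v S y"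
proof -
  have "{z \<in> S. val_beats v z x} \<subset> {z \<in> S. val_beats v z y}"
  proof
    show "{z \<in> S. val_beats v z x} \<subseteq> {z \<in> S. val_beats v z y}"
      using assms vb_trans[of v _ x y] by auto
    have "x \<in> {z \<in> S. val_beats v z y}" "x \<notin> {z \<in> S. val_beats v z x}" using assms by auto
    then show "{z \<in> S. val_beats v z x} \<noteq> {z \<in> S. val_beats v z y}" by blast
  qed
  then show ?thesis unfolding rk_def by (simp add: psubset_card_mono)
qed

lemma card_top_le:
  fixes S :: "'b::{finite,linorder} set"
  shows "card {x \<in> S. rk v S x < k} \<le> k"
proof -
  have "inj_on (rk v S) {x \<in> S. rk v S x < k}"
  proof (rule inj_onI)
    fix x y assume "x \<in> {x \<in> S. rk v S x < k}" "y \<in> {x \<in> S. rk v S x < k}" "rk v S x = rk v S y"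
    then show "x = y" using rk_less[of x S v y] rk_less[of y S v x] vb_total[of x y v] by force
  qed
  moreover have "rk v S ` {x \<in> S. rk v S x < k} \<subseteq> {..<k}" by auto
  ultimately show ?thesis using card_inj_on_le[of "rk v S" _ "{..<k}"] by simp
qed

lemma top_k_rk: "top_k v S k = {x \<in> S. rk v S x < k}"
  by (simp add: top_k_def rk_def)

lemma sorted_nth_eq:
  fixes zs :: "real list"
  assumes "sorted zs" "j < length zs"
    "length (filter (\<lambda>x. x < a) zs) \<le> j" "j < length (filter (\<lambda>x. x \<le> a) zs)"
  shows "zs ! j = a"
proof (rule ccontr)
  assume ne: "zs ! j \<noteq> a"
  show False
  proof (cases "zs ! j < a")
    case True
    have "{0..j} \<subseteq> {k. k < length zs \<and> zs ! k < a}"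
    proof
      fix k assume "k \<in> {0..j}"
      then have "k \<le> j" by simp
      then have "zs ! k \<le> zs ! j" using assms(1,2) by (simp add: sorted_nth_mono)
      then show "k \<in> {k. k < length zs \<and> zs ! k < a}" using True \<open>k \<le> j\<close> assms(2) by auto
    qed
    then have "card {0..j} \<le> card {k. k < length zs \<and> zs ! k < a}" by (intro card_mono) auto
    then show False using assms(3) by (simp add: length_filter_conv_card)
  next
    case False
    then have gt: "zs ! j > a" using ne by simp
    have "{k. k < length zs \<and> zs ! k \<le> a} \<subseteq> {0..<j}"
    proof
      fix k assume k: "k \<in> {k. k < length zs \<and> zs ! k \<le> a}"
      show "k \<in> {0..<j}"
      proof (rule ccontr)
        assume "k \<notin> {0..<j}"
        then have "j \<le> k" by simp
        then have "zs ! j \<le> zs ! k" using assms(1) k by (simp add: sorted_nth_mono)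
        then show False using k gt by simp
      qed
    qed
    then have "card {k. k < length zs \<and> zs ! k \<le> a} \<le> card {0..<j}" by (intro card_mono) auto
    then show False using assms(4) by (simp add: length_filter_conv_card)
  qed
qed

lemma length_filter_sort_set:
  fixes S :: "'b::{finite,linorder} set"
  shows "length (filter P (sort (map v (sorted_list_of_set S)))) = card {x \<in> S. P (v x)}"
proof -
  have "length (filter P (sort (map v (sorted_list_of_set S)))) =
        length (filter P (map v (sorted_list_of_set S)))"
    by (simp add: filter_sort)
  also have "\<dots> = length (filter (P \<circ> v) (sorted_list_of_set S))" by (simp add: filter_map)
  also have "\<dots> = card (set (filter (P \<circ> v) (sorted_list_of_set S)))"
    by (simp add: distinct_card[symmetric])
  also have "\<dots> = card {x \<in> S. P (v x)}" by (simp add: Collect_conj_eq Int_commute set_filter)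
  finally show ?thesis .
qed

lemma card_split:
  fixes S :: "'b::finite set"
  shows "card {x \<in> S. P x} + card {x \<in> S. \<not> P x} = card S"
proof -
  have "S = {x \<in> S. P x} \<union> {x \<in> S. \<not> P x}" by auto
  then have "card S = card ({x \<in> S. P x} \<union> {x \<in> S. \<not> P x})" by simp
  also have "\<dots> = card {x \<in> S. P x} + card {x \<in> S. \<not> P x}"
    by (rule card_Un_disjoint) auto
  finally show ?thesis by simp
qed

lemma kth_largest:
  fixes S :: "'b::{finite,linorder} set"
  assumes "k < card S"
  shows "rev (sort (map v (sorted_list_of_set S))) ! k = Max (v ` {x \<in> S. k \<le> rk v S x})"
    and "{x \<in> S. k \<le> rk v S x} \<noteq> {}"
proof -
  let ?N = "{x \<in> S. k \<le> rk v S x}"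
  have ctop: "card {x \<in> S. rk v S x < k} \<le> k" by (rule card_top_le)
  have "S = ?N \<union> {x \<in> S. rk v S x < k}" by auto
  then have "card S \<le> card ?N + card {x \<in> S. rk v S x < k}" by (metis card_Un_le)
  then show Nne: "?N \<noteq> {}" using assms ctop by (metis card.empty add_0 not_le order_trans)
  define M where "M = Max (v ` ?N)"
  have "M \<in> v ` ?N" unfolding M_def using Nne by (intro Max_in) auto
  then obtain e where e: "e \<in> ?N" "v e = M" by blast
  have Mge: "\<And>x. x \<in> ?N \<Longrightarrow> v x \<le> M" unfolding M_def by simp
  let ?zs = "sort (map v (sorted_list_of_set S))"
  have len: "length ?zs = card S" by simp
  have c1: "card {x \<in> S. v x < M} \<le> card S - Suc k"
  proof -
    have sub: "insert e {y \<in> S. val_beats v y e} \<subseteq> {x \<in> S. \<not> v x < M}"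
      using e by (auto simp: val_beats_def)
    have "card (insert e {y \<in> S. val_beats v y e}) = Suc (rk v S e)" unfolding rk_def by simp
    then have "Suc k \<le> card {x \<in> S. \<not> v x < M}" using e card_mono[OF _ sub] by simp
    moreover have "card {x \<in> S. v x < M} + card {x \<in> S. \<not> v x < M} = card S"
      by (rule card_split)
    ultimately show ?thesis by linarith
  qed
  have c2: "card {x \<in> S. v x > M} \<le> k"
  proof -
    have "{x \<in> S. v x > M} \<subseteq> {x \<in> S. rk v S x < k}"
    proof (rule subsetI, rule ccontr)
      fix x assume a: "x \<in> {x \<in> S. v x > M}" and b: "x \<notin> {x \<in> S. rk v S x < k}"
      then have "x \<in> ?N" by auto
      then have "v x \<le> M" by (rule Mge)
      with a show False by auto
    qed
    then have "card {x \<in> S. v x > M} \<le> card {x \<in> S. rk v S x < k}" by (intro card_mono) auto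
    then show ?thesis using ctop by linarith
  qed
  have c2': "card S - Suc k < card {x \<in> S. v x \<le> M}"
  proof -
    have "card {x \<in> S. v x \<le> M} + card {x \<in> S. \<not> v x \<le> M} = card S"
      by (rule card_split)
    moreover have "{x \<in> S. \<not> v x \<le> M} = {x \<in> S. v x > M}" by auto
    ultimately show ?thesis using c2 assms by simp
  qed
  have "?zs ! (card S - Suc k) = M"
    by (rule sorted_nth_eq) (use assms c1 c2' in \<open>simp_all add: length_filter_sort_set\<close>)
  then show "rev ?zs ! k = M" using assms by (simp add: rev_nth)
qed

definition NN :: "nat \<Rightarrow> ('b::linorder \<Rightarrow> real) \<Rightarrow> 'b set \<Rightarrow> 'b set \<Rightarrow> 'b set" where
  "NN m v X W = X - potential m v X W"

lemma potential_eq: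
  "potential m v X W = (if card (X - W) \<le> m - card W then X else W \<union> {x \<in> X - W. rk v (X - W) x < m - card W})"
  by (simp add: potential_def top_k_rk Let_def)

lemma NN_eq:
  "NN m v X W = (if card (X - W) \<le> m - card W then {} else {x \<in> X - W. m - card W \<le> rk v (X - W) x})"
  by (auto simp: NN_def potential_eq)

lemma cand_iff:
  "x \<in> potential m v X W - W \<longleftrightarrow> x \<in> X - W \<and> (card (X - W) \<le> m - card W \<or> rk v (X - W) x < m - card W)"
  by (auto simp: potential_eq)

lemma price_eq:
  fixes X :: "'b::{finite,linorder} set"
  shows "price m v X W = (if card (X - W) \<le> m - card W then 0 else Max (v ` {x \<in> X - W. m - card W \<le> rk v (X - W) x}))"
  using kth_largest(1)[of "m - card W" "X - W" v] by (simp add: price_def Let_def)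

lemma N_ne:
  fixes X :: "'b::{finite,linorder} set"
  shows "\<not> card (X - W) \<le> m - card W \<Longrightarrow> {x \<in> X - W. m - card W \<le> rk v (X - W) x} \<noteq> {}"
  using kth_largest(2)[of "m - card W" "X - W" v] by simp

lemma price_nonneg:
  fixes X :: "'b::{finite,linorder} set"
  assumes "\<And>x. v x \<ge> 0" shows "price m v X W \<ge> 0"
proof (cases "card (X - W) \<le> m - card W")
  case False
  let ?N = "{x \<in> X - W. m - card W \<le> rk v (X - W) x}"
  obtain e where "e \<in> ?N" using N_ne[OF False] by blast
  then have "v e \<le> Max (v ` ?N)" by simp
  then show ?thesis using False assms[of e] by (simp add: price_eq)
qed (simp add: price_eq)

lemma rk_mono:
  fixes S :: "'b::{finite,linorder} set"
  shows "S \<subseteq> T \<Longrightarrow> rk v S x \<le> rk v T x"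
  unfolding rk_def by (intro card_mono) auto

lemma NN_mono:
  fixes X :: "'b::{finite,linorder} set"
  assumes "X \<subseteq> Y" shows "NN m v X W \<subseteq> NN m v Y W"
proof (cases "card (X - W) \<le> m - card W")
  case False
  have "card (X - W) \<le> card (Y - W)" using assms by (intro card_mono) auto
  then have F2: "\<not> card (Y - W) \<le> m - card W" using False by linarith
  show ?thesis
  proof
    fix x assume "x \<in> NN m v X W"
    then have x: "x \<in> X - W" "m - card W \<le> rk v (X - W) x" using False by (auto simp: NN_eq)
    have "rk v (X - W) x \<le> rk v (Y - W) x" using assms by (intro rk_mono) auto
    then show "x \<in> NN m v Y W" using x F2 assms by (auto simp: NN_eq)
  qed
qed (simp add: NN_eq)

lemma price_mono:
  fixes X :: "'b::{finite,linorder} set"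
  assumes "X \<subseteq> Y" "\<And>x. v x \<ge> 0" shows "price m v X W \<le> price m v Y W"
proof (cases "card (X - W) \<le> m - card W")
  case True
  then have "price m v X W = 0" by (simp add: price_eq)
  then show ?thesis using price_nonneg[OF assms(2), where X=Y and W=W and m=m] by simp
next
  case False
  have "card (X - W) \<le> card (Y - W)" using assms by (intro card_mono) auto
  then have F2: "\<not> card (Y - W) \<le> m - card W" using False by linarith
  have sub: "{x \<in> X - W. m - card W \<le> rk v (X - W) x} \<subseteq> {x \<in> Y - W. m - card W \<le> rk v (Y - W) x}"
    using NN_mono[OF assms(1), of m v W] False F2 by (simp add: NN_eq)
  have "Max (v ` {x \<in> X - W. m - card W \<le> rk v (X - W) x}) \<le> Max (v ` {x \<in> Y - W. m - card W \<le> rk v (Y - W) x})"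
    by (rule Max_mono) (use sub N_ne[OF False, of v] in auto)
  then show ?thesis using False F2 by (simp add: price_eq)
qed

lemma price_le_cand:
  fixes X :: "'b::{finite,linorder} set"
  assumes "i \<in> potential m v X W - W" "\<And>x. v x \<ge> 0" shows "price m v X W \<le> v i"
proof (cases "card (X - W) \<le> m - card W")
  case True then show ?thesis using assms(2)[of i] by (simp add: price_eq)
next
  case False
  let ?S = "X - W" and ?k = "m - card W"
  have i: "i \<in> ?S" "rk v ?S i < ?k" using assms(1) False cand_iff[of i m v X W] by auto
  have "\<forall>n \<in> {x \<in> ?S. ?k \<le> rk v ?S x}. v n \<le> v i"
  proof
    fix n assume n: "n \<in> {x \<in> ?S. ?k \<le> rk v ?S x}"
    then have "n \<noteq> i" using i by auto
    moreover have "\<not> val_beats v n i" using rk_less[of n ?S v i] n i by auto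
    ultimately have "val_beats v i n" using vb_total by blast
    then show "v n \<le> v i" by (auto simp: val_beats_def)
  qed
  then show ?thesis using False N_ne[OF False] by (simp add: price_eq)
qed

lemma card_ins: "w \<notin> W \<Longrightarrow> m - card (insert w (W :: 'b::finite set)) = m - card W - 1"
  by simp

lemma NN_price_insert:
  fixes X :: "'b::{finite,linorder} set"
  assumes w: "w \<in> potential m v X W - W"
  shows "NN m v X (insert w W) = NN m v X W" "price m v X (insert w W) = price m v X W"
proof -
  let ?S = "X - W" and ?k = "m - card W" and ?S' = "X - insert w W"
  have wS: "w \<in> ?S" "w \<notin> W" using w by (auto simp: potential_eq split: if_splits)
  have S': "?S' = ?S - {w}" by auto
  have cS': "card ?S' = card ?S - 1" using wS S' by simp
  have k': "m - card (insert w W) = ?k - 1" using wS by simp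
  have "NN m v X (insert w W) = NN m v X W \<and> price m v X (insert w W) = price m v X W"
  proof (cases "card ?S \<le> ?k")
    case True
    then have "card ?S' \<le> m - card (insert w W)" using cS' k' by linarith
    then show ?thesis using True by (simp add: NN_eq price_eq del: card_insert_disjoint)
  next
    case False
    have rw: "rk v ?S w < ?k" using w False cand_iff[of w m v X W] by auto
    have F2: "\<not> card ?S' \<le> m - card (insert w W)" using cS' k' False rw by linarith
    have rkS': "\<And>x. rk v ?S' x = card ({y \<in> ?S. val_beats v y x} - {w})"
      unfolding rk_def by (rule arg_cong[where f=card]) auto
    have Neq: "{x \<in> ?S'. ?k - 1 \<le> rk v ?S' x} = {x \<in> ?S. ?k \<le> rk v ?S x}"
    proof (intro set_eqI iffI)
      fix x assume x: "x \<in> {x \<in> ?S'. ?k - 1 \<le> rk v ?S' x}"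
      then have xne: "x \<noteq> w" "x \<in> ?S" by auto
      show "x \<in> {x \<in> ?S. ?k \<le> rk v ?S x}"
      proof (cases "val_beats v w x")
        case True
        then have "rk v ?S' x = rk v ?S x - 1" using rkS'[of x] wS unfolding rk_def by simp
        moreover have "rk v ?S x > 0" using rk_less[of w ?S v x] True wS by simp
        ultimately show ?thesis using x xne rw by auto
      next
        case False
        then have "val_beats v x w" using vb_total xne by blast
        then have "rk v ?S x < rk v ?S w" using rk_less xne by blast
        moreover have "rk v ?S' x = rk v ?S x" using rkS'[of x] False unfolding rk_def by simp
        ultimately show ?thesis using x rw by auto
      qed
    next
      fix x assume x: "x \<in> {x \<in> ?S. ?k \<le> rk v ?S x}"
      then have xne: "x \<noteq> w" using rw by auto
      have "\<not> val_beats v x w" using rk_less[of x ?S v w] x rw by auto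
      then have "val_beats v w x" using vb_total xne by blast
      then have "rk v ?S' x = rk v ?S x - 1" using rkS'[of x] wS unfolding rk_def by simp
      then show "x \<in> {x \<in> ?S'. ?k - 1 \<le> rk v ?S' x}" using x xne by auto
    qed
    show ?thesis using False F2 Neq k' by (simp add: NN_eq price_eq del: card_insert_disjoint)
  qed
  then show "NN m v X (insert w W) = NN m v X W" "price m v X (insert w W) = price m v X W" by auto
qed

lemma rk_cong:
  assumes "\<And>x. x \<in> S \<Longrightarrow> v1 x = v2 x" "x \<in> S" shows "rk v1 S x = rk v2 S x"
proof -
  have "{y \<in> S. val_beats v1 y x} = {y \<in> S. val_beats v2 y x}"
    using assms by (auto simp: val_beats_def)
  then show ?thesis by (simp add: rk_def)
qed

lemma pot_price_cong:
  fixes X :: "'b::{finite,linorder} set"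
  assumes "\<And>x. x \<in> X - W \<Longrightarrow> v1 x = v2 x"
  shows "potential m v1 X W = potential m v2 X W" "price m v1 X W = price m v2 X W"
proof -
  show "potential m v1 X W = potential m v2 X W"
    using rk_cong[of "X - W" v1 v2] assms by (auto simp: potential_eq)
  have meq: "map v1 (sorted_list_of_set (X - W)) = map v2 (sorted_list_of_set (X - W))"
    using assms by (intro map_cong) auto
  show "price m v1 X W = price m v2 X W" unfolding price_def Let_def meq by (rule refl)
qed

lemma rk_transfer:
  fixes S :: "'b::{finite,linorder} set"
  assumes agree: "\<And>j. j \<noteq> i \<Longrightarrow> v1 j = v2 j"
    and "i \<in> S" "x \<in> S" "x \<noteq> i" "rk v1 S i < k" "rk v1 S x < k"
  shows "rk v2 S x < k"
proof (cases "val_beats v1 i x")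
  case True
  have "val_beats v2 y x \<Longrightarrow> y \<noteq> i \<Longrightarrow> val_beats v1 y x" for y
    using agree[of y] agree[of x] assms(4) by (simp add: val_beats_def)
  then have "{y \<in> S. val_beats v2 y x} \<subseteq> {y \<in> S. val_beats v1 y x}" using True assms(2) by auto
  then have "rk v2 S x \<le> rk v1 S x" unfolding rk_def by (intro card_mono) auto
  then show ?thesis using assms(6) by simp
next
  case False
  then have "val_beats v1 x i" using vb_total assms(4) by blast
  then have lt: "rk v1 S x < rk v1 S i" using rk_less assms(3) by blast
  have "val_beats v2 y x \<Longrightarrow> y \<noteq> i \<Longrightarrow> val_beats v1 y x" for y
    using agree[of y] agree[of x] assms(4) by (simp add: val_beats_def)
  then have "{y \<in> S. val_beats v2 y x} \<subseteq> insert i {y \<in> S. val_beats v1 y x}" by auto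
  then have "rk v2 S x \<le> card (insert i {y \<in> S. val_beats v1 y x})" unfolding rk_def by (intro card_mono) auto
  also have "\<dots> \<le> Suc (rk v1 S x)" unfolding rk_def by (rule card_insert_le_m1) auto
  finally show ?thesis using lt assms(5) by simp
qed

lemma pot_price_swap:
  fixes X :: "'b::{finite,linorder} set"
  assumes agree: "\<And>j. j \<noteq> i \<Longrightarrow> v1 j = v2 j"
    and iX: "i \<in> X - W" and ip: "i \<in> potential m v1 X W" and pr: "price m v1 X W < v2 i"
  shows "potential m v2 X W = potential m v1 X W \<and> price m v2 X W = price m v1 X W"
proof (cases "card (X - W) \<le> m - card W")
  case True then show ?thesis by (simp add: potential_eq price_eq)
next
  case False
  let ?S = "X - W" and ?k = "m - card W"
  let ?N1 = "{x \<in> ?S. ?k \<le> rk v1 ?S x}"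
  have r1: "rk v1 ?S i < ?k" using False iX ip cand_iff[of i m v1 X W] by auto
  have pr1: "price m v1 X W = Max (v1 ` ?N1)" using False by (simp add: price_eq)
  have r2: "rk v2 ?S i < ?k"
  proof -
    have sub: "{y \<in> ?S. val_beats v2 y i} \<subseteq> {y \<in> ?S. rk v1 ?S y < ?k} - {i}"
    proof
      fix y assume y: "y \<in> {y \<in> ?S. val_beats v2 y i}"
      then have yi: "y \<noteq> i" by auto
      have "v2 y \<ge> v2 i" using y by (auto simp: val_beats_def)
      then have ge: "v1 y \<ge> v2 i" using agree[OF yi] by simp
      have "\<not> ?k \<le> rk v1 ?S y"
      proof
        assume "?k \<le> rk v1 ?S y"
        then have "y \<in> ?N1" using y by auto
        then have "v1 y \<le> Max (v1 ` ?N1)" by simp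
        then show False using ge pr pr1 by simp
      qed
      then show "y \<in> {y \<in> ?S. rk v1 ?S y < ?k} - {i}" using y yi by auto
    qed
    have "rk v2 ?S i = card {y \<in> ?S. val_beats v2 y i}" by (simp add: rk_def)
    also have "\<dots> \<le> card ({y \<in> ?S. rk v1 ?S y < ?k} - {i})"
      using sub by (intro card_mono) auto
    also have "\<dots> = card {y \<in> ?S. rk v1 ?S y < ?k} - 1" using iX r1 by simp
    also have "\<dots> \<le> ?k - 1" using card_top_le[where v=v1 and S="?S" and k="?k"] by simp
    finally show ?thesis using r1 by linarith
  qed
  have agree': "\<And>j. j \<noteq> i \<Longrightarrow> v2 j = v1 j" using agree by metis
  have topeq: "\<And>x. x \<in> ?S \<Longrightarrow> (rk v1 ?S x < ?k) = (rk v2 ?S x < ?k)"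
  proof -
    fix x assume x: "x \<in> ?S"
    show "(rk v1 ?S x < ?k) = (rk v2 ?S x < ?k)"
    proof (cases "x = i")
      case True then show ?thesis using r1 r2 by simp
    next
      case False
      show ?thesis
        using rk_transfer[OF agree _ x False r1] rk_transfer[OF agree' _ x False r2] iX by blast
    qed
  qed
  have Neq: "{x \<in> ?S. ?k \<le> rk v2 ?S x} = ?N1" using topeq by (auto simp: not_less[symmetric])
  have iN: "i \<notin> ?N1" using r1 by auto
  have "v2 ` ?N1 = v1 ` ?N1"
  proof (rule image_cong)
    fix x assume "x \<in> ?N1"
    then have "x \<noteq> i" using iN by auto
    then show "v2 x = v1 x" using agree by metis
  qed simp
  then have "price m v2 X W = price m v1 X W" using False Neq pr1 by (simp add: price_eq)
  moreover have "potential m v2 X W = potential m v1 X W"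
    using False topeq by (auto simp: potential_eq)
  ultimately show ?thesis by simp
qed

definition closedP :: "nat \<Rightarrow> ('b::linorder \<Rightarrow> real) \<Rightarrow> ('b \<Rightarrow> 'b set) \<Rightarrow> 'b set \<Rightarrow> 'b set \<Rightarrow> bool" where
  "closedP m v r W X \<longleftrightarrow> (\<forall>x \<in> W \<union> NN m v X W. r x \<subseteq> X)"

lemma closure_props:
  fixes A :: "'b::{finite,linorder} set"
  shows "A \<subseteq> closure m v r A W \<and> closedP m v r W (closure m v r A W) \<and>
         (\<forall>X. A \<subseteq> X \<and> closedP m v r W X \<longrightarrow> closure m v r A W \<subseteq> X)"
  unfolding closure_def
proof (rule while_rule[where P = "\<lambda>Y. A \<subseteq> Y \<and> (\<forall>X. A \<subseteq> X \<and> closedP m v r W X \<longrightarrow> Y \<subseteq> X)"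
      and r = "measure (\<lambda>Y. card (UNIV - Y))"])
  show "A \<subseteq> A \<and> (\<forall>X. A \<subseteq> X \<and> closedP m v r W X \<longrightarrow> A \<subseteq> X)" by auto
next
  fix Y assume P: "A \<subseteq> Y \<and> (\<forall>X. A \<subseteq> X \<and> closedP m v r W X \<longrightarrow> Y \<subseteq> X)"
    and b: "clos_cond m v r W Y"
  let ?D = "{x \<in> W \<union> (Y - potential m v Y W). \<not> r x \<subseteq> Y}"
  have x: "Min ?D \<in> ?D" using b by (intro Min_in) (auto simp: clos_cond_def)
  show "A \<subseteq> clos_step m v r W Y \<and> (\<forall>X. A \<subseteq> X \<and> closedP m v r W X \<longrightarrow> clos_step m v r W Y \<subseteq> X)"
  proof (intro conjI allI impI)
    show "A \<subseteq> clos_step m v r W Y" using P by (auto simp: clos_step_def)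
    fix X assume X: "A \<subseteq> X \<and> closedP m v r W X"
    then have YX: "Y \<subseteq> X" using P by blast
    have "Min ?D \<in> W \<union> NN m v X W" using x NN_mono[OF YX, of m v W] by (auto simp: NN_def)
    then have "r (Min ?D) \<subseteq> X" using X by (auto simp: closedP_def)
    then show "clos_step m v r W Y \<subseteq> X" using YX by (auto simp: clos_step_def)
  qed
next
  fix Y assume P: "A \<subseteq> Y \<and> (\<forall>X. A \<subseteq> X \<and> closedP m v r W X \<longrightarrow> Y \<subseteq> X)"
    and nb: "\<not> clos_cond m v r W Y"
  then show "A \<subseteq> Y \<and> closedP m v r W Y \<and> (\<forall>X. A \<subseteq> X \<and> closedP m v r W X \<longrightarrow> Y \<subseteq> X)"
    by (auto simp: clos_cond_def closedP_def NN_def)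
next
  show "wf (measure (\<lambda>Y. card (UNIV - Y)))" by simp
next
  fix Y assume b: "clos_cond m v r W Y"
  let ?D = "{x \<in> W \<union> (Y - potential m v Y W). \<not> r x \<subseteq> Y}"
  have x: "Min ?D \<in> ?D" using b by (intro Min_in) (auto simp: clos_cond_def)
  then have "UNIV - clos_step m v r W Y \<subset> UNIV - Y" by (auto simp: clos_step_def)
  then show "(clos_step m v r W Y, Y) \<in> measure (\<lambda>Y. card (UNIV - Y))"
    by (simp add: psubset_card_mono)
qed

lemma closure_ext: "(A :: 'b::{finite,linorder} set) \<subseteq> closure m v r A W"
  using closure_props by blast
lemma closure_closed: "closedP m v r W (closure m v r (A :: 'b::{finite,linorder} set) W)"
  using closure_props by blast
lemma closure_least: "(A :: 'b::{finite,linorder} set) \<subseteq> X \<Longrightarrow> closedP m v r W X \<Longrightarrow> closure m v r A W \<subseteq> X"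
  using closure_props by blast

lemma prio_irrefl[simp]: "\<not> prio_beats \<sigma> r x x" by (simp add: prio_beats_def)
lemma prio_asym: "prio_beats \<sigma> r x y \<Longrightarrow> \<not> prio_beats \<sigma> r y x" by (auto simp: prio_beats_def)

lemma pick_spec:
  fixes S :: "'b::{finite,linorder} set" and \<sigma> :: "'b set \<Rightarrow> 'p::linorder"
  assumes "S \<noteq> {}"
  shows "pick \<sigma> r S \<in> S \<and> (\<forall>y \<in> S. y \<noteq> pick \<sigma> r S \<longrightarrow> prio_beats \<sigma> r (pick \<sigma> r S) y)"
proof -
  define M where "M = Max ((\<lambda>x. \<sigma> (r x)) ` S)"
  define T where "T = {x \<in> S. \<sigma> (r x) = M}"
  have "M \<in> (\<lambda>x. \<sigma> (r x)) ` S" unfolding M_def using assms by (intro Max_in) auto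
  then have "T \<noteq> {}" unfolding T_def by auto
  then have wT: "Min T \<in> T" by (intro Min_in) auto
  define w where "w = Min T"
  have wS: "w \<in> S" "\<sigma> (r w) = M" using wT unfolding w_def T_def by auto
  have beat: "\<forall>y \<in> S. y \<noteq> w \<longrightarrow> prio_beats \<sigma> r w y"
  proof (intro ballI impI)
    fix y assume y: "y \<in> S" "y \<noteq> w"
    have le: "\<sigma> (r y) \<le> M" unfolding M_def using y by simp
    show "prio_beats \<sigma> r w y"
    proof (cases "\<sigma> (r y) = M")
      case True
      then have "y \<in> T" using y unfolding T_def by simp
      then have "w \<le> y" unfolding w_def by simp
      then show ?thesis using True wS y by (auto simp: prio_beats_def)
    next
      case False then show ?thesis using le wS by (auto simp: prio_beats_def)
    qed
  qed
  have "pick \<sigma> r S = w" unfolding pick_def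
  proof (rule the_equality)
    show "w \<in> S \<and> (\<forall>y \<in> S. y \<noteq> w \<longrightarrow> prio_beats \<sigma> r w y)" using wS beat by simp
    fix z assume z: "z \<in> S \<and> (\<forall>y \<in> S. y \<noteq> z \<longrightarrow> prio_beats \<sigma> r z y)"
    show "z = w"
    proof (rule ccontr)
      assume "z \<noteq> w"
      then show False using z beat wS prio_asym by metis
    qed
  qed
  then show ?thesis using wS beat by simp
qed

lemma pick_unique:
  fixes S :: "'b::{finite,linorder} set" and \<sigma> :: "'b set \<Rightarrow> 'p::linorder"
  assumes "w \<in> S" "\<forall>y \<in> S. y \<noteq> w \<longrightarrow> prio_beats \<sigma> r w y"
  shows "pick \<sigma> r S = w"
proof -
  have ne: "S \<noteq> {}" using assms by auto
  show ?thesis using pick_spec[OF ne, of \<sigma> r] assms prio_asym by metis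
qed

lemma pick_swap:
  fixes S :: "'b::{finite,linorder} set" and \<sigma> :: "'b set \<Rightarrow> 'p::linorder"
  assumes agree: "\<And>j. j \<noteq> i \<Longrightarrow> rD j = rT j" and sig: "\<sigma> (rD i) \<le> \<sigma> (rT i)"
    and ne: "S \<noteq> {}" and wT: "pick \<sigma> rT S \<noteq> i"
  shows "pick \<sigma> rD S = pick \<sigma> rT S"
proof -
  let ?w = "pick \<sigma> rT S"
  have sp: "?w \<in> S" "\<forall>y \<in> S. y \<noteq> ?w \<longrightarrow> prio_beats \<sigma> rT ?w y" using pick_spec[OF ne] by auto
  have "\<forall>y \<in> S. y \<noteq> ?w \<longrightarrow> prio_beats \<sigma> rD ?w y"
  proof (intro ballI impI)
    fix y assume y: "y \<in> S" "y \<noteq> ?w"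
    have b: "prio_beats \<sigma> rT ?w y" using sp y by simp
    show "prio_beats \<sigma> rD ?w y"
    proof (cases "y = i")
      case True
      then show ?thesis using b sig agree[OF wT] by (auto simp: prio_beats_def)
    next
      case False
      then show ?thesis using b agree[OF wT] agree[OF False] by (simp add: prio_beats_def)
    qed
  qed
  then show ?thesis using pick_unique sp(1) by metis
qed

lemma pick_i:
  fixes S :: "'b::{finite,linorder} set" and \<sigma> :: "'b set \<Rightarrow> 'p::linorder"
  assumes agree: "\<And>j. j \<noteq> i \<Longrightarrow> rD j = rT j" and sig: "\<sigma> (rD i) \<le> \<sigma> (rT i)"
    and ne: "S \<noteq> {}" and wD: "pick \<sigma> rD S = i"
  shows "pick \<sigma> rT S = i"
proof (rule ccontr)
  assume "pick \<sigma> rT S \<noteq> i"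
  then have "pick \<sigma> rD S = pick \<sigma> rT S" using pick_swap[where rD=rD and rT=rT and i=i and S=S and \<sigma>=\<sigma>] agree sig ne by blast
  then show False using wD \<open>pick \<sigma> rT S \<noteq> i\<close> by simp
qed

definition FR :: "nat \<Rightarrow> ('b set \<Rightarrow> 'p::linorder) \<Rightarrow> ('b::linorder \<Rightarrow> real) \<Rightarrow> ('b \<Rightarrow> 'b set)
    \<Rightarrow> 'b set \<times> 'b set \<times> ('b \<Rightarrow> real) \<Rightarrow> 'b set \<times> 'b set \<times> ('b \<Rightarrow> real)" where
  "FR m \<sigma> v r s = while (mudan_cond m v r) (mudan_step m \<sigma> v r) s"

lemma FR_unfold:
  "FR m \<sigma> v r (A, W, p) =
    (let C = closure m v r A W; S = potential m v C W - W; w = pick \<sigma> r S in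
     if S \<noteq> {} then FR m \<sigma> v r (C, insert w W, p(w := price m v C W)) else (A, W, p))"
  unfolding FR_def
  by (subst while_unfold) (simp add: mudan_cond_def mudan_step_def Let_def)

lemma card_dec:
  fixes W :: "'b::finite set"
  shows "w \<notin> W \<Longrightarrow> card (UNIV - insert w W) < card (UNIV - W)"
  by (rule psubset_card_mono) auto

lemma run_keep:
  fixes W :: "'b::{finite,linorder} set" and \<sigma> :: "'b set \<Rightarrow> 'p::linorder"
  shows "i \<in> W \<Longrightarrow> FR m \<sigma> v r (A, W, p) = (A', W', p') \<Longrightarrow> i \<in> W' \<and> p' i = p i"
proof (induction "card (UNIV - W)" arbitrary: A W p rule: less_induct)
  case less
  define C where "C = closure m v r A W"
  define S where "S = potential m v C W - W"
  define w where "w = pick \<sigma> r S"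
  show ?case
  proof (cases "S = {}")
    case True
    then show ?thesis using less.prems FR_unfold[of m \<sigma> v r A W p] by (simp add: C_def S_def Let_def)
  next
    case False
    have wS: "w \<in> S" using pick_spec[OF False, of \<sigma> r] unfolding w_def by blast
    then have wW: "w \<notin> W" "w \<noteq> i" using less.prems(1) S_def by auto
    have eq: "FR m \<sigma> v r (C, insert w W, p(w := price m v C W)) = (A', W', p')"
      using less.prems(2) FR_unfold[of m \<sigma> v r A W p] False by (simp add: C_def S_def w_def Let_def)
    have "i \<in> W' \<and> p' i = (p(w := price m v C W)) i"
      by (rule less.hyps[OF card_dec[OF wW(1)] _ eq]) (use less.prems in simp)
    then show ?thesis using wW by simp
  qed
qed

lemma run_le:
  fixes W :: "'b::{finite,linorder} set" and \<sigma> :: "'b set \<Rightarrow> 'p::linorder"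
  assumes nn: "\<And>x. v x \<ge> 0"
  shows "(i \<in> W \<longrightarrow> p i \<le> v i) \<Longrightarrow> FR m \<sigma> v r (A, W, p) = (A', W', p') \<Longrightarrow> i \<in> W' \<longrightarrow> p' i \<le> v i"
proof (induction "card (UNIV - W)" arbitrary: A W p rule: less_induct)
  case less
  define C where "C = closure m v r A W"
  define S where "S = potential m v C W - W"
  define w where "w = pick \<sigma> r S"
  show ?case
  proof (cases "S = {}")
    case True
    then show ?thesis using less.prems FR_unfold[of m \<sigma> v r A W p] by (simp add: C_def S_def Let_def)
  next
    case False
    have wS: "w \<in> S" using pick_spec[OF False, of \<sigma> r] unfolding w_def by blast
    then have wW: "w \<notin> W" using S_def by auto
    have eq: "FR m \<sigma> v r (C, insert w W, p(w := price m v C W)) = (A', W', p')"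
      using less.prems(2) FR_unfold[of m \<sigma> v r A W p] False by (simp add: C_def S_def w_def Let_def)
    have "i \<in> insert w W \<longrightarrow> (p(w := price m v C W)) i \<le> v i"
    proof
      assume "i \<in> insert w W"
      show "(p(w := price m v C W)) i \<le> v i"
      proof (cases "i = w")
        case True
        then have "price m v C W \<le> v i" using price_le_cand[OF _ nn] wS S_def by simp
        then show ?thesis using True by simp
      next
        case False
        then show ?thesis using less.prems(1) \<open>i \<in> insert w W\<close> by simp
      qed
    qed
    then show ?thesis by (rule less.hyps[OF card_dec[OF wW] _ eq])
  qed
qed

lemma run_thr:
  fixes W :: "'b::{finite,linorder} set" and \<sigma> :: "'b set \<Rightarrow> 'p::linorder"
  assumes nn: "\<And>x. v x \<ge> 0"
  shows "i \<notin> W \<Longrightarrow> FR m \<sigma> v r (A, W, p) = (A', W', p') \<Longrightarrow> i \<in> W' \<Longrightarrow>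
    price m v (closure m v r A W) W \<le> p' i \<and>
    (i \<in> closure m v r A W \<longrightarrow> i \<in> potential m v (closure m v r A W) W)"
proof (induction "card (UNIV - W)" arbitrary: A W p rule: less_induct)
  case less
  define C where "C = closure m v r A W"
  define S where "S = potential m v C W - W"
  define w where "w = pick \<sigma> r S"
  show ?case
  proof (cases "S = {}")
    case True
    then show ?thesis using less.prems FR_unfold[of m \<sigma> v r A W p] by (simp add: C_def S_def Let_def)
  next
    case False
    have wS: "w \<in> S" using pick_spec[OF False, of \<sigma> r] unfolding w_def by blast
    then have wW: "w \<notin> W" using S_def by auto
    have eq: "FR m \<sigma> v r (C, insert w W, p(w := price m v C W)) = (A', W', p')"
      using less.prems(2) FR_unfold[of m \<sigma> v r A W p] False by (simp add: C_def S_def w_def Let_def)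
    show ?thesis
    proof (cases "w = i")
      case True
      have "i \<in> insert w W" using True by simp
      from run_keep[OF this eq] have "p' i = price m v C W" using True by simp
      then show ?thesis using True wS S_def C_def by simp
    next
      case False
      have iW: "i \<notin> insert w W" using False less.prems(1) by simp
      define C' where "C' = closure m v r C (insert w W)"
      have IH: "price m v C' (insert w W) \<le> p' i \<and> (i \<in> C' \<longrightarrow> i \<in> potential m v C' (insert w W))"
        unfolding C'_def by (rule less.hyps[OF card_dec[OF wW] iW eq less.prems(3)])
      have CC': "C \<subseteq> C'" unfolding C'_def by (rule closure_ext)
      have wP: "w \<in> potential m v C W - W" using wS S_def by simp
      have "price m v C W = price m v C (insert w W)" using NN_price_insert(2)[OF wP] by simp
      also have "\<dots> \<le> price m v C' (insert w W)" by (rule price_mono[OF CC' nn])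
      finally have p1: "price m v C W \<le> p' i" using IH by simp
      have "i \<in> C \<longrightarrow> i \<in> potential m v C W"
      proof
        assume iC: "i \<in> C"
        show "i \<in> potential m v C W"
        proof (rule ccontr)
          assume "i \<notin> potential m v C W"
          then have "i \<in> NN m v C W" using iC by (simp add: NN_def)
          then have "i \<in> NN m v C (insert w W)" using NN_price_insert(1)[OF wP] by simp
          then have "i \<in> NN m v C' (insert w W)" using NN_mono[OF CC'] by blast
          then show False using IH iC CC' by (auto simp: NN_def)
        qed
      qed
      then show ?thesis using p1 C_def by simp
    qed
  qed
qed

context
  fixes vD vT :: "'b::{finite,linorder} \<Rightarrow> real" and rD rT :: "'b \<Rightarrow> 'b set" and i :: 'b
    and \<sigma> :: "'b set \<Rightarrow> 'p::linorder" and m :: nat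
  assumes agv: "\<And>j. j \<noteq> i \<Longrightarrow> vD j = vT j"
    and agr: "\<And>j. j \<noteq> i \<Longrightarrow> rD j = rT j"
    and sig: "\<sigma> (rD i) \<le> \<sigma> (rT i)"
    and nnD: "\<And>x. vD x \<ge> 0" and nnT: "\<And>x. vT x \<ge> 0"
begin

lemma swap_at:
  assumes "i \<in> X - W \<longrightarrow> i \<in> potential m vD X W \<and> price m vD X W < vT i"
  shows "potential m vT X W = potential m vD X W \<and> price m vT X W = price m vD X W"
proof (cases "i \<in> X - W")
  case True
  then have h: "i \<in> potential m vD X W" "price m vD X W < vT i" using assms by auto
  show ?thesis by (rule pot_price_swap[OF agv True h])
next
  case False
  have ag: "\<And>x. x \<in> X - W \<Longrightarrow> vD x = vT x" using False agv by metis
  have "potential m vD X W = potential m vT X W" by (rule pot_price_cong(1)[OF ag])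
  moreover have "price m vD X W = price m vT X W" by (rule pot_price_cong(2)[OF ag])
  ultimately show ?thesis by simp
qed

lemma closure_swap:
  assumes iW: "i \<notin> W"
    and pr: "price m vD (closure m vD rD A W) W < vT i"
    and ip: "i \<in> closure m vD rD A W \<longrightarrow> i \<in> potential m vD (closure m vD rD A W) W"
  shows "closure m vT rT A W = closure m vD rD A W"
proof -
  define C where "C = closure m vD rD A W"
  define CT where "CT = closure m vT rT A W"
  have ipC: "i \<in> C \<longrightarrow> i \<in> potential m vD C W" using ip unfolding C_def .
  have prC: "price m vD C W < vT i" using pr unfolding C_def .
  have iNN: "i \<notin> NN m vD C W" using ipC by (simp add: NN_def)
  have AC: "A \<subseteq> C" unfolding C_def by (rule closure_ext)
  have ACT: "A \<subseteq> CT" unfolding CT_def by (rule closure_ext)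
  have clC: "closedP m vD rD W C" unfolding C_def by (rule closure_closed)
  have clCT: "closedP m vT rT W CT" unfolding CT_def by (rule closure_closed)
  have sC: "potential m vT C W = potential m vD C W \<and> price m vT C W = price m vD C W"
    by (rule swap_at) (use prC ipC in simp)
  have "closedP m vT rT W C"
    unfolding closedP_def
  proof
    fix x assume x: "x \<in> W \<union> NN m vT C W"
    then have xD: "x \<in> W \<union> NN m vD C W" using sC by (simp add: NN_def)
    have "x \<noteq> i" using xD iW iNN by blast
    then have "rT x = rD x" using agr by metis
    moreover have "rD x \<subseteq> C" using clC xD unfolding closedP_def by blast
    ultimately show "rT x \<subseteq> C" by simp
  qed
  then have CTC: "CT \<subseteq> C" unfolding CT_def by (rule closure_least[OF AC])
  have iNN2: "i \<notin> NN m vD CT W" using iNN NN_mono[OF CTC, of m vD W] by blast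
  have iCT: "i \<in> CT \<longrightarrow> i \<in> potential m vD CT W" using iNN2 by (simp add: NN_def)
  have "price m vD CT W \<le> price m vD C W" by (rule price_mono[OF CTC nnD])
  then have prCT: "price m vD CT W < vT i" using prC by simp
  have sCT: "potential m vT CT W = potential m vD CT W \<and> price m vT CT W = price m vD CT W"
    by (rule swap_at) (use prCT iCT in simp)
  have "closedP m vD rD W CT"
    unfolding closedP_def
  proof
    fix x assume x: "x \<in> W \<union> NN m vD CT W"
    then have xT: "x \<in> W \<union> NN m vT CT W" using sCT by (simp add: NN_def)
    have "x \<noteq> i" using x iW iNN2 by blast
    then have "rD x = rT x" using agr by metis
    moreover have "rT x \<subseteq> CT" using clCT xT unfolding closedP_def by blast
    ultimately show "rD x \<subseteq> CT" by simp
  qed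
  then have "C \<subseteq> CT" unfolding C_def by (rule closure_least[OF ACT])
  then have "CT = C" using CTC by blast
  then show ?thesis unfolding C_def CT_def .
qed

lemma run_couple:
  "i \<notin> W \<Longrightarrow> FR m \<sigma> vD rD (A, W, p) = (A', W', p') \<Longrightarrow> i \<in> W' \<Longrightarrow> p' i < vT i \<Longrightarrow>
   \<exists>A'' W'' p''. FR m \<sigma> vT rT (A, W, p) = (A'', W'', p'') \<and> i \<in> W'' \<and> p'' i \<le> p' i"
proof (induction "card (UNIV - W)" arbitrary: A W p rule: less_induct)
  case less
  define C where "C = closure m vD rD A W"
  have thr: "price m vD C W \<le> p' i \<and> (i \<in> C \<longrightarrow> i \<in> potential m vD C W)"
    unfolding C_def by (rule run_thr[OF nnD less.prems(1,2,3)])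
  have pr: "price m vD C W < vT i" using thr less.prems(4) by simp
  have CT: "closure m vT rT A W = C"
    unfolding C_def by (rule closure_swap[OF less.prems(1)]) (use pr thr in \<open>simp_all add: C_def\<close>)
  have sC: "potential m vT C W = potential m vD C W \<and> price m vT C W = price m vD C W"
    by (rule swap_at) (use pr thr in simp)
  define S where "S = potential m vD C W - W"
  show ?case
  proof (cases "S = {}")
    case True
    then have "FR m \<sigma> vD rD (A, W, p) = (A, W, p)"
      using FR_unfold[of m \<sigma> vD rD A W p] by (simp add: C_def S_def Let_def)
    then show ?thesis using less.prems by simp
  next
    case False
    define wT where "wT = pick \<sigma> rT S"
    have wS: "wT \<in> S" using pick_spec[OF False, of \<sigma> rT] unfolding wT_def by blast
    then have wW: "wT \<notin> W" using S_def by auto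
    have eqT: "FR m \<sigma> vT rT (A, W, p) = FR m \<sigma> vT rT (C, insert wT W, p(wT := price m vD C W))"
      using FR_unfold[of m \<sigma> vT rT A W p] False CT sC by (simp add: S_def wT_def Let_def)
    show ?thesis
    proof (cases "wT = i")
      case True
      obtain A'' W'' p'' where res: "FR m \<sigma> vT rT (C, insert wT W, p(wT := price m vD C W)) = (A'', W'', p'')"
        by (rule prod_cases3)
      have "i \<in> insert wT W" using True by simp
      from run_keep[OF this res] have "i \<in> W'' \<and> p'' i = price m vD C W" using True by simp
      then show ?thesis using eqT res thr by auto
    next
      case False2: False
      have wD: "pick \<sigma> rD S = wT"
      proof -
        have ne: "pick \<sigma> rT S \<noteq> i" using False2 unfolding wT_def .
        show ?thesis unfolding wT_def
          by (rule pick_swap[where rD=rD and rT=rT and i=i and S=S and \<sigma>=\<sigma>]) (auto simp: agr sig False ne)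
      qed
      have eqD: "FR m \<sigma> vD rD (A, W, p) = FR m \<sigma> vD rD (C, insert wT W, p(wT := price m vD C W))"
        using FR_unfold[of m \<sigma> vD rD A W p] False wD by (simp add: C_def S_def Let_def)
      have iW: "i \<notin> insert wT W" using False2 less.prems(1) by simp
      have "FR m \<sigma> vD rD (C, insert wT W, p(wT := price m vD C W)) = (A', W', p')"
        using eqD less.prems(2) by simp
      from less.hyps[OF card_dec[OF wW] iW this less.prems(3,4)]
      show ?thesis unfolding eqT .
    qed
  qed
qed

end

lemma closedP_cong:
  fixes X :: "'b::{finite,linorder} set"
  assumes agv: "\<And>x. x \<in> R \<Longrightarrow> v1 x = v2 x" and agr: "\<And>x. x \<in> R \<Longrightarrow> r1 x = r2 x"
    and XR: "X \<subseteq> R" and WR: "W \<subseteq> R"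
  shows "closedP m v1 r1 W X = closedP m v2 r2 W X"
proof -
  have "potential m v1 X W = potential m v2 X W" by (rule pot_price_cong(1)) (use agv XR in auto)
  then have NNe: "NN m v1 X W = NN m v2 X W" by (simp add: NN_def)
  have "W \<union> NN m v1 X W \<subseteq> R" using XR WR by (auto simp: NN_def)
  then have eq: "\<forall>x \<in> W \<union> NN m v1 X W. r1 x = r2 x" using agr by blast
  show ?thesis unfolding closedP_def NNe[symmetric] using eq by (intro ball_cong) auto
qed

lemma closure_cong:
  fixes A :: "'b::{finite,linorder} set"
  assumes agv: "\<And>x. x \<in> R \<Longrightarrow> v1 x = v2 x" and agr: "\<And>x. x \<in> R \<Longrightarrow> r1 x = r2 x"
    and clo: "\<And>x. x \<in> R \<Longrightarrow> r1 x \<subseteq> R"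
    and AR: "A \<subseteq> R" and WR: "W \<subseteq> R"
  shows "closure m v1 r1 A W = closure m v2 r2 A W \<and> closure m v1 r1 A W \<subseteq> R"
proof -
  define C1 where "C1 = closure m v1 r1 A W"
  define C2 where "C2 = closure m v2 r2 A W"
  have "closedP m v1 r1 W R" unfolding closedP_def using clo WR by (auto simp: NN_def)
  then have C1R: "C1 \<subseteq> R" unfolding C1_def by (rule closure_least[OF AR])
  have clo2: "\<And>x. x \<in> R \<Longrightarrow> r2 x \<subseteq> R" using clo agr by metis
  have "closedP m v2 r2 W R" unfolding closedP_def using clo2 WR by (auto simp: NN_def)
  then have C2R: "C2 \<subseteq> R" unfolding C2_def by (rule closure_least[OF AR])
  have "closedP m v1 r1 W C1" unfolding C1_def by (rule closure_closed)
  then have "closedP m v2 r2 W C1" using closedP_cong[OF agv agr C1R WR] by simp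
  then have "C2 \<subseteq> C1" unfolding C2_def by (rule closure_least[OF closure_ext[of A m v1 r1 W, folded C1_def]])
  moreover have "closedP m v2 r2 W C2" unfolding C2_def by (rule closure_closed)
  then have "closedP m v1 r1 W C2" using closedP_cong[OF agv agr C2R WR] by simp
  then have "C1 \<subseteq> C2" unfolding C1_def by (rule closure_least[OF closure_ext[of A m v2 r2 W, folded C2_def]])
  ultimately show ?thesis using C1R unfolding C1_def C2_def by blast
qed

lemma pick_cong:
  fixes S :: "'b::{finite,linorder} set" and \<sigma> :: "'b set \<Rightarrow> 'p::linorder"
  assumes "\<And>x. x \<in> S \<Longrightarrow> r1 x = r2 x"
  shows "pick \<sigma> r1 S = pick \<sigma> r2 S"
proof (cases "S = {}")
  case True then show ?thesis by (simp add: pick_def)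
next
  case False
  have sp: "pick \<sigma> r1 S \<in> S" "\<forall>y \<in> S. y \<noteq> pick \<sigma> r1 S \<longrightarrow> prio_beats \<sigma> r1 (pick \<sigma> r1 S) y"
    using pick_spec[OF False, of \<sigma> r1] by auto
  have "\<forall>y \<in> S. y \<noteq> pick \<sigma> r1 S \<longrightarrow> prio_beats \<sigma> r2 (pick \<sigma> r1 S) y"
    using sp assms by (auto simp: prio_beats_def)
  then show ?thesis using pick_unique[OF sp(1)] by metis
qed

lemma run_cong:
  fixes A :: "'b::{finite,linorder} set" and \<sigma> :: "'b set \<Rightarrow> 'p::linorder"
  assumes agv: "\<And>x. x \<in> R \<Longrightarrow> v1 x = v2 x" and agr: "\<And>x. x \<in> R \<Longrightarrow> r1 x = r2 x"
    and clo: "\<And>x. x \<in> R \<Longrightarrow> r1 x \<subseteq> R"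
  shows "A \<subseteq> R \<Longrightarrow> W \<subseteq> R \<Longrightarrow> FR m \<sigma> v1 r1 (A, W, p) = FR m \<sigma> v2 r2 (A, W, p)"
proof (induction "card (UNIV - W)" arbitrary: A W p rule: less_induct)
  case less
  define C where "C = closure m v1 r1 A W"
  have cl: "closure m v1 r1 A W = closure m v2 r2 A W \<and> closure m v1 r1 A W \<subseteq> R"
    by (rule closure_cong[OF agv agr clo less.prems])
  have cc: "closure m v2 r2 A W = C" "C \<subseteq> R" using cl unfolding C_def by auto
  have pe: "potential m v1 C W = potential m v2 C W" by (rule pot_price_cong(1)) (use agv cc in auto)
  have pre: "price m v1 C W = price m v2 C W" by (rule pot_price_cong(2)) (use agv cc in auto)
  define S where "S = potential m v1 C W - W"
  have SC: "S \<subseteq> C" by (auto simp: S_def potential_eq)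
  have pke: "pick \<sigma> r1 S = pick \<sigma> r2 S" by (rule pick_cong) (use agr SC cc in auto)
  show ?case
  proof (cases "S = {}")
    case True
    then show ?thesis using FR_unfold[of m \<sigma> v1 r1 A W p] FR_unfold[of m \<sigma> v2 r2 A W p] cc pe
      by (simp add: C_def S_def Let_def)
  next
    case False
    define w where "w = pick \<sigma> r1 S"
    have wS: "w \<in> S" using pick_spec[OF False, of \<sigma> r1] unfolding w_def by blast
    then have wW: "w \<notin> W" using S_def by auto
    have e1: "FR m \<sigma> v1 r1 (A, W, p) = FR m \<sigma> v1 r1 (C, insert w W, p(w := price m v1 C W))"
      using FR_unfold[of m \<sigma> v1 r1 A W p] False by (simp add: C_def S_def w_def Let_def)
    have e2: "FR m \<sigma> v2 r2 (A, W, p) = FR m \<sigma> v2 r2 (C, insert w W, p(w := price m v1 C W))"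
      using FR_unfold[of m \<sigma> v2 r2 A W p] False cc pe pre pke by (simp add: S_def w_def Let_def)
    have "insert w W \<subseteq> R" using wS SC cc less.prems by auto
    from less.hyps[OF card_dec[OF wW] cc(2) this]
    show ?thesis unfolding e1 e2 .
  qed
qed

lemma reach_closed: "x \<in> reach rs \<theta> \<Longrightarrow> snd (\<theta> x) \<subseteq> reach rs \<theta>"
  by (auto intro: reach.step)

lemma reach_agree:
  assumes "\<And>x. x \<in> reach rs \<theta>a \<Longrightarrow> \<theta>b x = \<theta>a x"
  shows "reach rs \<theta>a \<subseteq> reach rs \<theta>b"
proof
  fix x assume "x \<in> reach rs \<theta>a"
  then show "x \<in> reach rs \<theta>b"
  proof (induction rule: reach.induct)
    case (seller x) then show ?case by (rule reach.seller)
  next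
    case (step x y)
    then show ?case using assms[of x] by (auto intro: reach.step)
  qed
qed

lemma run_silence:
  fixes \<theta>a \<theta>b :: "'b::{finite,linorder} profile" and \<sigma> :: "'b set \<Rightarrow> 'p::linorder"
  assumes ag: "\<And>x. x \<in> reach rs \<theta>a \<Longrightarrow> \<theta>b x = \<theta>a x"
  shows "mudan_run m \<sigma> rs (silence rs \<theta>b) = FR m \<sigma> (\<lambda>j. fst (\<theta>a j)) (\<lambda>j. snd (\<theta>a j)) (rs, {}, \<lambda>_. 0)"
proof -
  let ?R = "reach rs \<theta>a"
  have sub: "?R \<subseteq> reach rs \<theta>b" by (rule reach_agree[OF ag])
  have sa: "\<And>x. x \<in> ?R \<Longrightarrow> silence rs \<theta>b x = \<theta>a x" using sub ag by (auto simp: silence_def)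
  have "FR m \<sigma> (\<lambda>j. fst (silence rs \<theta>b j)) (\<lambda>j. snd (silence rs \<theta>b j)) (rs, {}, \<lambda>_. 0)
      = FR m \<sigma> (\<lambda>j. fst (\<theta>a j)) (\<lambda>j. snd (\<theta>a j)) (rs, {}, \<lambda>_. 0)"
  proof (rule run_cong[where R = ?R])
    show "\<And>x. x \<in> ?R \<Longrightarrow> fst (silence rs \<theta>b x) = fst (\<theta>a x)" using sa by simp
    show "\<And>x. x \<in> ?R \<Longrightarrow> snd (silence rs \<theta>b x) = snd (\<theta>a x)" using sa by simp
    show "\<And>x. x \<in> ?R \<Longrightarrow> snd (silence rs \<theta>b x) \<subseteq> ?R" using sa reach_closed by metis
    show "rs \<subseteq> ?R" by (auto intro: reach.seller)
    show "{} \<subseteq> ?R" by simp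
  qed
  then show ?thesis by (simp add: mudan_run_def FR_def)
qed

theorem lemma2:
  fixes \<theta> \<theta>' :: "'b::{finite,linorder} profile"
    and \<sigma> :: "'b set \<Rightarrow> 'p::linorder"
    and rs :: "'b set" and m :: nat and i :: 'b
    and v'' :: real and r'' :: "'b set"
  assumes "m \<ge> 1"
    and "\<And>X Y. X \<subseteq> Y \<Longrightarrow> \<sigma> X \<le> \<sigma> Y"
    and "\<And>j. fst (\<theta> j) \<ge> 0"
    and "\<And>j. j \<in> reach rs \<theta>"
    and "\<And>j. fst (\<theta>' j) \<ge> 0 \<and> snd (\<theta>' j) \<subseteq> snd (\<theta> j)"
    and "v'' \<ge> 0" and "r'' \<subseteq> snd (\<theta> i)"
  shows "utility m \<sigma> rs \<theta> i (\<theta>'(i := \<theta> i))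
         \<ge> utility m \<sigma> rs \<theta> i
              (\<lambda>j. if j = i then (v'', r'')
                   else if j \<in> reach rs (\<theta>'(i := (v'', r''))) then \<theta>' j
                   else (0, {}))"
proof -
  define \<Theta>T where "\<Theta>T = \<theta>'(i := \<theta> i)"
  define \<Theta>D where "\<Theta>D = \<theta>'(i := (v'', r''))"
  define \<Theta>2 where "\<Theta>2 = (\<lambda>j. if j = i then (v'', r'')
                   else if j \<in> reach rs (\<theta>'(i := (v'', r''))) then \<theta>' j
                   else (0, {}))"
  define vT where "vT = (\<lambda>j. fst (\<Theta>T j))"
  define rT where "rT = (\<lambda>j. snd (\<Theta>T j))"
  define vD where "vD = (\<lambda>j. fst (\<Theta>D j))"
  define rD where "rD = (\<lambda>j. snd (\<Theta>D j))"
  have runT: "mudan_run m \<sigma> rs (silence rs \<Theta>T) = FR m \<sigma> vT rT (rs, {}, \<lambda>_. 0)"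
    unfolding vT_def rT_def by (rule run_silence) simp
  have runD: "mudan_run m \<sigma> rs (silence rs \<Theta>2) = FR m \<sigma> vD rD (rs, {}, \<lambda>_. 0)"
    unfolding vD_def rD_def
  proof (rule run_silence)
    fix x assume h: "x \<in> reach rs \<Theta>D"
    show "\<Theta>2 x = \<Theta>D x"
    proof (cases "x = i")
      case True then show ?thesis by (simp add: \<Theta>2_def \<Theta>D_def)
    next
      case False
      have "\<Theta>2 x = \<theta>' x" using h False unfolding \<Theta>2_def \<Theta>D_def by simp
      then show ?thesis using False by (simp add: \<Theta>D_def)
    qed
  qed
  obtain AT WT pT where rT': "FR m \<sigma> vT rT (rs, {}, \<lambda>_. 0) = (AT, WT, pT)" by (rule prod_cases3)
  obtain AD WD pD where rD': "FR m \<sigma> vD rD (rs, {}, \<lambda>_. 0) = (AD, WD, pD)" by (rule prod_cases3)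
  have vTi: "vT i = fst (\<theta> i)" by (simp add: vT_def \<Theta>T_def)
  have uT: "utility m \<sigma> rs \<theta> i \<Theta>T = (if i \<in> WT then vT i - pT i else 0)"
    using runT rT' vTi by (simp add: utility_def payment_def alloc_def)
  have uD: "utility m \<sigma> rs \<theta> i \<Theta>2 = (if i \<in> WD then vT i - pD i else 0)"
    using runD rD' vTi by (simp add: utility_def payment_def alloc_def)
  have nnT: "\<And>x. vT x \<ge> 0" using assms(3,5) by (simp add: vT_def \<Theta>T_def)
  have nnD: "\<And>x. vD x \<ge> 0" using assms(5,6) by (simp add: vD_def \<Theta>D_def)
  have agv: "\<And>j. j \<noteq> i \<Longrightarrow> vD j = vT j" by (simp add: vD_def vT_def \<Theta>D_def \<Theta>T_def)
  have agr: "\<And>j. j \<noteq> i \<Longrightarrow> rD j = rT j" by (simp add: rD_def rT_def \<Theta>D_def \<Theta>T_def)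
  have sig: "\<sigma> (rD i) \<le> \<sigma> (rT i)" using assms(2,7) by (simp add: rD_def rT_def \<Theta>D_def \<Theta>T_def)
  have leT: "i \<in> WT \<longrightarrow> pT i \<le> vT i"
    by (rule run_le[OF nnT _ rT']) simp
  have uT0: "utility m \<sigma> rs \<theta> i \<Theta>T \<ge> 0" using uT leT by simp
  have "utility m \<sigma> rs \<theta> i \<Theta>2 \<le> utility m \<sigma> rs \<theta> i \<Theta>T"
  proof (cases "i \<in> WD \<and> pD i < vT i")
    case False
    then have "utility m \<sigma> rs \<theta> i \<Theta>2 \<le> 0" using uD by auto
    then show ?thesis using uT0 by linarith
  next
    case True
    have "\<exists>A'' W'' p''. FR m \<sigma> vT rT (rs, {}, \<lambda>_. 0) = (A'', W'', p'') \<and> i \<in> W'' \<and> p'' i \<le> pD i"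
      by (rule run_couple[where vD=vD and vT=vT and rD=rD and rT=rT and i=i and \<sigma>=\<sigma> and m=m,
            OF agv agr sig nnD nnT _ rD']) (use True in auto)
    then have "i \<in> WT" "pT i \<le> pD i" using rT' by auto
    then show ?thesis using uT uD True by simp
  qed
  then show ?thesis unfolding \<Theta>T_def \<Theta>2_def .
qed

end
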